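(* Consider the following kinetic transport model. Let $\{Z_k\}_{k\ge1}$ be a Markov chain on the two states $\{\mathrm{F},\mathrm{A}\}$ with transition matrix $$\begin{pmatrix}1-a & a\\ b & 1-b\end{pmatrix}$$ (rows and columns indexed by $\mathrm F,\mathrm A$), $a,b\in[0,1]$, $a+b=1$, and with initial distribution equal to the stationary distribution $(\frac{b}{a+b},\frac{a}{a+b})$. Let $K_n=\sum_{k=1}^n \mathbf 1_{\{Z_k=\mathrm F\}}$. Independently of $\{Z_k\}$, let $(X_k,Y_k)_{k\ge1}$ be i.i.d. with $$P((X_k,Y_k)=(j,0))=\alpha,\qquad P((X_k,Y_k)=(0,j))=\beta\qquad (j=\pm1),$$ $\alpha,\beta\ge0$, $\alpha+\beta=1/2$. Let $S(n)=(S_X(n),S_Y(n))=\sum_{k=1}^{K_n}(X_k+1,Y_k)$. Then for $n\ge1$ and $0\le x\le n$, $$\operatorname{Var}(S_Y(n)\mid S_X(n)=n+x)=\operatorname{Var}(S_Y(n)\mid S_X(n)=n-x).$$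
   Context: Conditional variances are considered for conditioning events of positive probability. *)

theory Defs
  imports "HOL-Probability.Probability"
begin

datatype state = F | A

definition trans_pmf :: "real \<Rightarrow> real \<Rightarrow> state \<Rightarrow> state pmf" where
  "trans_pmf a b s = (case s of
      F \<Rightarrow> map_pmf (\<lambda>c. if c then F else A) (bernoulli_pmf (1 - a))
    | A \<Rightarrow> map_pmf (\<lambda>c. if c then F else A) (bernoulli_pmf b))"

definition init_pmf :: "real \<Rightarrow> real \<Rightarrow> state pmf" where
  "init_pmf a b = map_pmf (\<lambda>c. if c then F else A) (bernoulli_pmf (b / (a + b)))"

primrec mc_from :: "(state \<Rightarrow> state pmf) \<Rightarrow> state \<Rightarrow> nat \<Rightarrow> state list pmf" where
  "mc_from P s 0 = return_pmf []"
| "mc_from P s (Suc m) = do {t \<leftarrow> P s; ts \<leftarrow> mc_from P t m; return_pmf (t # ts)}"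

text \<open>Law of (Z_1, ..., Z_n), for n \<ge> 1.\<close>
definition chain_pmf :: "real \<Rightarrow> real \<Rightarrow> nat \<Rightarrow> state list pmf" where
  "chain_pmf a b n = do {z1 \<leftarrow> init_pmf a b; zs \<leftarrow> mc_from (trans_pmf a b) z1 (n - 1);
                         return_pmf (z1 # zs)}"

definition step_pmf :: "real \<Rightarrow> real \<Rightarrow> (int \<times> int) pmf" where
  "step_pmf \<alpha> \<beta> = embed_pmf (\<lambda>p. if p = (1,0) \<or> p = (-1,0) then \<alpha>
                              else if p = (0,1) \<or> p = (0,-1) then \<beta> else 0)"

text \<open>Joint law of (Z_1..Z_n) and independent i.i.d. (X_1,Y_1)..(X_n,Y_n);
  only the first K_n \<le> n steps are ever used.\<close>
definition model_pmf :: "real \<Rightarrow> real \<Rightarrow> real \<Rightarrow> real \<Rightarrow> nat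
    \<Rightarrow> (state list \<times> (int \<times> int) list) pmf" where
  "model_pmf a b \<alpha> \<beta> n = pair_pmf (chain_pmf a b n) (replicate_pmf n (step_pmf \<alpha> \<beta>))"

definition K :: "state list \<Rightarrow> nat" where
  "K zs = length (filter (\<lambda>z. z = F) zs)"

definition SX :: "state list \<times> (int \<times> int) list \<Rightarrow> int" where
  "SX \<omega> = (\<Sum>k<K (fst \<omega>). fst (snd \<omega> ! k) + 1)"

definition SY :: "state list \<times> (int \<times> int) list \<Rightarrow> int" where
  "SY \<omega> = (\<Sum>k<K (fst \<omega>). snd (snd \<omega> ! k))"

definition cond_var :: "'a pmf \<Rightarrow> 'a set \<Rightarrow> ('a \<Rightarrow> real) \<Rightarrow> real" where
  "cond_var M E f = measure_pmf.variance (cond_pmf M E) f"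

end

theory Submission
  imports Defs
begin


definition Zp :: "real \<Rightarrow> state pmf" where
  "Zp b = map_pmf (\<lambda>c. if c then F else A) (bernoulli_pmf b)"

lemma mc_from_const: "(\<And>s. P s = Q) \<Longrightarrow> mc_from P s m = replicate_pmf m Q"
  by (induction m arbitrary: s) simp_all

lemma chain_eq:
  assumes "a + b = 1" "1 \<le> n"
  shows "chain_pmf a b n = replicate_pmf n (Zp b)"
proof -
  have t: "trans_pmf a b s = Zp b" for s
  proof -
    have "1 - a = b" using assms(1) by simp
    then show ?thesis by (cases s) (simp_all add: trans_pmf_def Zp_def)
  qed
  have i: "init_pmf a b = Zp b" using assms(1) by (simp add: init_pmf_def Zp_def)
  obtain m where n: "n = Suc m" using assms(2) by (cases n) auto
  show ?thesis unfolding chain_pmf_def i n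
    by (simp add: mc_from_const[OF t])
qed

definition gsum :: "nat \<Rightarrow> (int \<times> int) list \<Rightarrow> int \<times> int" where
  "gsum m ws = (\<Sum>k<m. fst (ws ! k) + 1, \<Sum>k<m. snd (ws ! k))"

primrec sW :: "(int \<times> int) pmf \<Rightarrow> nat \<Rightarrow> (int \<times> int) pmf" where
  "sW W 0 = return_pmf (0, 0)"
| "sW W (Suc m) = do {w \<leftarrow> W; r \<leftarrow> sW W m; return_pmf (fst w + 1 + fst r, snd w + snd r)}"

lemma gsum_Cons: "gsum (Suc m) (w # ws) = (fst w + 1 + fst (gsum m ws), snd w + snd (gsum m ws))"
  unfolding gsum_def sum.lessThan_Suc_shift by simp

lemma sW_rep: "m \<le> n \<Longrightarrow> map_pmf (gsum m) (replicate_pmf n W) = sW W m"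
proof (induction m arbitrary: n)
  case 0
  then show ?case by (simp add: gsum_def map_pmf_def[symmetric] map_pmf_const)
next
  case (Suc m)
  then obtain n' where n: "n = Suc n'" "m \<le> n'" by (cases n) auto
  have "map_pmf (gsum (Suc m)) (replicate_pmf n W)
      = do {w \<leftarrow> W; r \<leftarrow> map_pmf (gsum m) (replicate_pmf n' W); return_pmf (fst w + 1 + fst r, snd w + snd r)}"
    by (simp add: n map_bind_pmf gsum_Cons bind_map_pmf)
  also have "\<dots> = sW W (Suc m)" using Suc.IH[OF n(2)] by simp
  finally show ?case .
qed

lemma K_Cons: "K (z # zs) = (if z = F then Suc (K zs) else K zs)"
  by (simp add: K_def)

lemma K_le: "K zs \<le> length zs"
  by (simp add: K_def)

definition Rn :: "real \<Rightarrow> (int \<times> int) pmf \<Rightarrow> nat \<Rightarrow> (int \<times> int) pmf" where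
  "Rn b W n = bind_pmf (replicate_pmf n (Zp b)) (\<lambda>zs. sW W (K zs))"

lemma R_eq:
  assumes "a + b = 1" "1 \<le> n"
  shows "map_pmf (\<lambda>\<omega>. (SX \<omega>, SY \<omega>)) (model_pmf a b \<alpha> \<beta> n) = Rn b (step_pmf \<alpha> \<beta>) n"
proof -
  have eq: "(\<lambda>\<omega>. (SX \<omega>, SY \<omega>)) = (\<lambda>\<omega>. gsum (K (fst \<omega>)) (snd \<omega>))"
    by (auto simp: SX_def SY_def gsum_def)
  show ?thesis
    unfolding model_pmf_def chain_eq[OF assms] pair_pmf_def map_bind_pmf Rn_def eq
  proof (rule bind_pmf_cong[OF refl], goal_cases)
    case (1 zs)
    then have "length zs = n" by (simp add: set_replicate_pmf)
    then have "K zs \<le> n" using K_le by metis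
    show ?case
      using sW_rep[OF \<open>K zs \<le> n\<close>] by (simp add: map_bind_pmf map_pmf_def[symmetric] map_pmf_comp)
  qed
qed

lemma Rn_Suc:
  "Rn b W (Suc n) = bind_pmf (Zp b) (\<lambda>z. if z = F then
      bind_pmf W (\<lambda>w. bind_pmf (Rn b W n) (\<lambda>r. return_pmf (fst w + 1 + fst r, snd w + snd r)))
    else Rn b W n)"
proof -
  have "Rn b W (Suc n) = bind_pmf (Zp b) (\<lambda>z. bind_pmf (replicate_pmf n (Zp b)) (\<lambda>zs. sW W (K (z # zs))))"
    by (simp add: Rn_def bind_assoc_pmf bind_return_pmf)
  also have "\<dots> = bind_pmf (Zp b) (\<lambda>z. if z = F then
      bind_pmf W (\<lambda>w. bind_pmf (Rn b W n) (\<lambda>r. return_pmf (fst w + 1 + fst r, snd w + snd r)))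
    else Rn b W n)"
  proof (rule bind_pmf_cong[OF refl])
    fix z
    show "bind_pmf (replicate_pmf n (Zp b)) (\<lambda>zs. sW W (K (z # zs))) = (if z = F then
      bind_pmf W (\<lambda>w. bind_pmf (Rn b W n) (\<lambda>r. return_pmf (fst w + 1 + fst r, snd w + snd r)))
    else Rn b W n)"
    proof (cases "z = F")
      case True
      then show ?thesis
        by (simp add: K_Cons Rn_def bind_assoc_pmf)
          (rule bind_commute_pmf)
    next
      case False
      then show ?thesis by (simp add: K_Cons Rn_def)
    qed
  qed
  finally show ?thesis .
qed

lemma pmf_shift: fixes c0 d0 k y :: int shows "pmf (map_pmf (\<lambda>r. (c0 + fst r, d0 + snd r)) M) (k, y) = pmf M (k - c0, y - d0)"
proof -
  have i: "inj (\<lambda>r::int\<times>int. (c0 + fst r, d0 + snd r))"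
    by (auto simp: inj_def prod_eq_iff)
  have "pmf (map_pmf (\<lambda>r::int\<times>int. (c0 + fst r, d0 + snd r)) M) ((\<lambda>r::int\<times>int. (c0 + fst r, d0 + snd r)) (k - c0, y - d0)) = pmf M (k - c0, y - d0)"
    by (rule pmf_map_inj'[OF i])
  then show ?thesis by simp
qed

definition A4 :: "(int \<times> int) set" where "A4 = {(1,0), (-1,0), (0,1), (0,-1)}"

lemma pmf_step:
  assumes "0 \<le> \<alpha>" "0 \<le> \<beta>" "\<alpha> + \<beta> = 1/2"
  shows "pmf (step_pmf \<alpha> \<beta>) p = (if p = (1,0) \<or> p = (-1,0) then \<alpha>
                              else if p = (0,1) \<or> p = (0,-1) then \<beta> else 0)"
  unfolding step_pmf_def
proof (rule pmf_embed_pmf)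
  show "0 \<le> (if p = (1,0) \<or> p = (-1,0) then \<alpha> else if p = (0,1) \<or> p = (0,-1) then \<beta> else 0)" for p
    using assms by auto
  have "(\<integral>\<^sup>+ x. ennreal (if (x::int\<times>int) = (1,0) \<or> x = (-1,0) then \<alpha> else if x = (0,1) \<or> x = (0,-1) then \<beta> else 0) \<partial>count_space UNIV)
     = (\<Sum>x\<in>A4. ennreal (if x = (1,0) \<or> x = (-1,0) then \<alpha> else if x = (0,1) \<or> x = (0,-1) then \<beta> else 0))"
    by (rule nn_integral_count_space'[of A4]) (auto simp: A4_def)
  also have "\<dots> = ennreal (\<Sum>x\<in>A4. (if x = (1,0) \<or> x = (-1,0) then \<alpha> else if x = (0,1) \<or> x = (0,-1) then \<beta> else 0))"
    using assms by (subst sum_ennreal) auto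
  also have "(\<Sum>x\<in>A4. (if x = (1,0) \<or> x = (-1,0) then \<alpha> else if x = (0,1) \<or> x = (0,-1) then \<beta> else 0)) = 1"
    using assms by (simp add: A4_def)
  finally show "(\<integral>\<^sup>+ x. ennreal (if (x::int\<times>int) = (1,0) \<or> x = (-1,0) then \<alpha> else if x = (0,1) \<or> x = (0,-1) then \<beta> else 0) \<partial>count_space UNIV) = 1"
    by simp
qed

lemma pmf_Rn_Suc:
  assumes "0 \<le> b" "b \<le> 1" "0 \<le> \<alpha>" "0 \<le> \<beta>" "\<alpha> + \<beta> = 1/2"
  shows "pmf (Rn b (step_pmf \<alpha> \<beta>) (Suc n)) (k, y) =
    (1 - b) * pmf (Rn b (step_pmf \<alpha> \<beta>) n) (k, y)
    + b * (\<alpha> * pmf (Rn b (step_pmf \<alpha> \<beta>) n) (k - 2, y) + \<alpha> * pmf (Rn b (step_pmf \<alpha> \<beta>) n) (k, y)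
         + \<beta> * pmf (Rn b (step_pmf \<alpha> \<beta>) n) (k - 1, y - 1) + \<beta> * pmf (Rn b (step_pmf \<alpha> \<beta>) n) (k - 1, y + 1))"
proof -
  define W where "W = step_pmf \<alpha> \<beta>"
  define L where "L = Rn b W n"
  have inner: "pmf (bind_pmf W (\<lambda>w. bind_pmf L (\<lambda>r. return_pmf (fst w + 1 + fst r, snd w + snd r)))) (k, y)
     = \<alpha> * L' (k - 2, y) + \<alpha> * L' (k, y) + \<beta> * L' (k - 1, y - 1) + \<beta> * L' (k - 1, y + 1)"
    if "L' = pmf L" for L'
  proof -
    have "pmf (bind_pmf W (\<lambda>w. bind_pmf L (\<lambda>r. return_pmf (fst w + 1 + fst r, snd w + snd r)))) (k, y)
        = (\<integral>w. pmf L (k - (fst w + 1), y - snd w) \<partial>measure_pmf W)"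
      by (simp add: pmf_bind map_pmf_def[symmetric] pmf_shift)
    also have "\<dots> = (\<Sum>w\<in>A4. pmf L (k - (fst w + 1), y - snd w) * pmf W w)"
      by (rule integral_measure_pmf_real)
        (auto simp: A4_def W_def pmf_step[OF assms(3-5)] set_pmf_iff split: if_splits)
    also have "\<dots> = \<alpha> * L' (k - 2, y) + \<alpha> * L' (k, y) + \<beta> * L' (k - 1, y - 1) + \<beta> * L' (k - 1, y + 1)"
      by (simp add: A4_def W_def pmf_step[OF assms(3-5)] that algebra_simps)
    finally show ?thesis .
  qed
  define X where "X = bind_pmf W (\<lambda>w. bind_pmf L (\<lambda>r. return_pmf (fst w + 1 + fst r, snd w + snd r)))"
  have "pmf (Rn b W (Suc n)) (k, y) = (\<integral>c. (if c then pmf X (k, y) else pmf L (k, y)) \<partial>bernoulli_pmf b)"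
    unfolding Rn_Suc pmf_bind Zp_def integral_map_pmf L_def[symmetric] X_def[symmetric]
    by (intro Bochner_Integration.integral_cong) auto
  also have "\<dots> = pmf X (k, y) * b + pmf L (k, y) * (1 - b)"
    using assms by simp
  finally show ?thesis
    unfolding W_def[symmetric] L_def[symmetric] X_def inner[OF refl]
    by (simp add: algebra_simps)
qed



lemma stepA:
  fixes L :: "int \<Rightarrow> int \<Rightarrow> real" and c e g :: real and N :: int and m :: nat
  assumes IH: "\<And>k y. L k y * c ^ nat (k - N) * e ^ nat (N - k) = L (2 * N - k) y * e ^ nat (k - N) * c ^ nat (N - k)"
  shows "c ^ Suc m * (c * L (N + 2 + int m) y + e * L (N + int m) y + g * L (N + 1 + int m) (y - 1) + g * L (N + 1 + int m) (y + 1))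
       = e ^ Suc m * (c * L (N - int m) y + e * L (N - int m - 2) y + g * L (N - int m - 1) (y - 1) + g * L (N - int m - 1) (y + 1))"
proof -
  have i1: "L (N + 2 + int m) y * c ^ (m + 2) = L (N - int m - 2) y * e ^ (m + 2)"
    using IH[of "N + 2 + int m" y] by (simp add: nat_add_distrib algebra_simps)
  have i2: "L (N + int m) y * c ^ m = L (N - int m) y * e ^ m"
    using IH[of "N + int m" y] by (simp add: algebra_simps)
  have i3: "L (N + 1 + int m) y' * c ^ (m + 1) = L (N - int m - 1) y' * e ^ (m + 1)" for y'
    using IH[of "N + 1 + int m" y'] by (simp add: nat_add_distrib algebra_simps)
  have f1: "c ^ Suc m * (c * L (N + 2 + int m) y) = e ^ Suc m * (e * L (N - int m - 2) y)"
    using i1 by (simp add: algebra_simps)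
  have f2: "c ^ Suc m * (e * L (N + int m) y) = e ^ Suc m * (c * L (N - int m) y)"
  proof -
    have "c ^ Suc m * (e * L (N + int m) y) = c * e * (L (N + int m) y * c ^ m)" by (simp add: algebra_simps)
    also have "\<dots> = e ^ Suc m * (c * L (N - int m) y)" using i2 by (simp add: algebra_simps)
    finally show ?thesis .
  qed
  have f3: "c ^ Suc m * (g * L (N + 1 + int m) y') = e ^ Suc m * (g * L (N - int m - 1) y')" for y'
    using i3[of y'] by (simp add: algebra_simps)
  show ?thesis
    by (simp only: distrib_left f1 f2 f3)
qed

lemma sym_gen:
  fixes L :: "nat \<Rightarrow> int \<Rightarrow> int \<Rightarrow> real" and c e g :: real
  assumes L0: "\<And>k y. L 0 k y = (if k = 0 \<and> y = 0 then 1 else 0)"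
    and LS: "\<And>n k y. L (Suc n) k y = c * L n k y + e * L n (k - 2) y + g * L n (k - 1) (y - 1) + g * L n (k - 1) (y + 1)"
  shows "L n k y * c ^ nat (k - int n) * e ^ nat (int n - k) = L n (2 * int n - k) y * e ^ nat (k - int n) * c ^ nat (int n - k)"
proof (induction n arbitrary: k y)
  case 0
  then show ?case by (simp add: L0)
next
  case (Suc n)
  define N where "N = int n"
  have IH': "L n k y * c ^ nat (k - N) * e ^ nat (N - k) = L n (2 * N - k) y * e ^ nat (k - N) * c ^ nat (N - k)" for k y
    using Suc.IH[of k y] by (simp add: N_def)
  have A: "L (Suc n) (N + 2 + int m) y * c ^ Suc m = L (Suc n) (N - int m) y * e ^ Suc m" for m y
  proof -
    have s1: "N + 2 + int m - 2 = N + int m" "N + 2 + int m - 1 = N + 1 + int m" by simp_all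
    have e1: "L (Suc n) (N + 2 + int m) y = c * L n (N + 2 + int m) y + e * L n (N + int m) y + g * L n (N + 1 + int m) (y - 1) + g * L n (N + 1 + int m) (y + 1)"
      unfolding LS s1 ..
    have e2: "L (Suc n) (N - int m) y = c * L n (N - int m) y + e * L n (N - int m - 2) y + g * L n (N - int m - 1) (y - 1) + g * L n (N - int m - 1) (y + 1)"
      unfolding LS ..
    show ?thesis
      unfolding e1 e2 mult.commute[of _ "c ^ Suc m"] mult.commute[of _ "e ^ Suc m"]
      by (rule stepA[of "L n" c N e, OF IH'])
  qed
  consider (a) "k \<ge> N + 2" | (b) "k = N + 1" | (c) "k \<le> N" by linarith
  then show ?case
  proof cases
    case a
    define m where "m = nat (k - N - 2)"
    have k: "k = N + 2 + int m" using a by (simp add: m_def)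
    have hh: "nat (1 + int m) = Suc m" by simp
    show ?thesis using A[of m y] unfolding k by (simp add: N_def hh)
  next
    case b
    then show ?thesis by (simp add: N_def)
  next
    case c
    define m where "m = nat (N - k)"
    have k: "k = N - int m" using c by (simp add: m_def)
    have hh: "nat (1 + int m) = Suc m" by simp
    have hh2: "int n + (2 + int m) = int n + 2 + int m" by simp
    show ?thesis using A[of m y] unfolding k by (simp add: N_def hh hh2 mult.commute)
  qed
qed



lemma deg_gen:
  fixes L :: "nat \<Rightarrow> int \<Rightarrow> int \<Rightarrow> real" and g :: real
  assumes L0: "\<And>k y. L 0 k y = (if k = 0 \<and> y = 0 then 1 else 0)"
    and LS: "\<And>n k y. L (Suc n) k y = 0 * L n k y + 0 * L n (k - 2) y + g * L n (k - 1) (y - 1) + g * L n (k - 1) (y + 1)"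
  shows "L n k y \<noteq> 0 \<Longrightarrow> k = int n"
proof (induction n arbitrary: k y)
  case 0
  then show ?case by (simp add: L0 split: if_splits)
next
  case (Suc n)
  then have "L n (k - 1) (y - 1) \<noteq> 0 \<or> L n (k - 1) (y + 1) \<noteq> 0" using LS[of n k y] by auto
  then have "k - 1 = int n" using Suc.IH by blast
  then show ?case by simp
qed

lemma pmf_prop_eq:
  assumes "\<And>z. pmf p z = \<kappa> * pmf q z"
  shows "p = q"
proof -
  obtain z0 where z0: "z0 \<in> set_pmf q" using set_pmf_not_empty[of q] by blast
  then have "pmf q z0 > 0" by (simp add: pmf_positive)
  moreover have "pmf p z0 \<ge> 0" by simp
  ultimately have k: "\<kappa> \<ge> 0" using assms[of z0] by (simp add: zero_le_mult_iff)
  have "1 = emeasure (measure_pmf p) UNIV" by simp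
  also have "\<dots> = (\<integral>\<^sup>+ z. ennreal (pmf p z) \<partial>count_space UNIV)" by (simp add: nn_integral_pmf)
  also have "\<dots> = (\<integral>\<^sup>+ z. ennreal \<kappa> * ennreal (pmf q z) \<partial>count_space UNIV)"
    using k by (simp add: assms ennreal_mult)
  also have "\<dots> = ennreal \<kappa> * emeasure (measure_pmf q) UNIV"
    by (simp add: nn_integral_cmult nn_integral_pmf)
  also have "\<dots> = ennreal \<kappa>" by simp
  finally have "\<kappa> = 1" using k
    by (metis ennreal_1 ennreal_inj zero_le_one)
  then show ?thesis using assms by (intro pmf_eqI) simp
qed

lemma var_map: "measure_pmf.variance P (\<lambda>\<omega>. real_of_int (h \<omega>)) = measure_pmf.variance (map_pmf h P) real_of_int"
  by simp

lemma arith_aux: "(Q2::real) \<noteq> 0 \<Longrightarrow> u * v / Q1 = u * Q2 / Q1 * (v / Q2)"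
  by (simp add: field_simps)

lemma nonempty_of_prob:
  "measure_pmf.prob M E > 0 \<Longrightarrow> set_pmf M \<inter> E \<noteq> {}"
  using measure_pmf_zero_iff[of M E] by auto

theorem proposition3:
  fixes a b \<alpha> \<beta> :: real and n x :: nat
  assumes "0 \<le> a" "a \<le> 1" "0 \<le> b" "b \<le> 1" "a + b = 1"
    and "0 \<le> \<alpha>" "0 \<le> \<beta>" "\<alpha> + \<beta> = 1/2"
    and "1 \<le> n" "x \<le> n"
    and "measure_pmf.prob (model_pmf a b \<alpha> \<beta> n) {\<omega>. SX \<omega> = int n + int x} > 0"
    and "measure_pmf.prob (model_pmf a b \<alpha> \<beta> n) {\<omega>. SX \<omega> = int n - int x} > 0"
  shows "cond_var (model_pmf a b \<alpha> \<beta> n) {\<omega>. SX \<omega> = int n + int x} (\<lambda>\<omega>. real_of_int (SY \<omega>))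
       = cond_var (model_pmf a b \<alpha> \<beta> n) {\<omega>. SX \<omega> = int n - int x} (\<lambda>\<omega>. real_of_int (SY \<omega>))"
proof (cases "x = 0")
  case True
  then show ?thesis by simp
next
  case False
  define M where "M = model_pmf a b \<alpha> \<beta> n"
  define W where "W = step_pmf \<alpha> \<beta>"
  define Fm where "Fm = (\<lambda>\<omega>. (SX \<omega>, SY \<omega>))"
  define R where "R = map_pmf Fm M"
  define E1 where "E1 = {\<omega>. SX \<omega> = int n + int x}"
  define E2 where "E2 = {\<omega>. SX \<omega> = int n - int x}"
  define S1 where "S1 = {p::int\<times>int. fst p = int n + int x}"
  define S2 where "S2 = {p::int\<times>int. fst p = int n - int x}"
  define c where "c = (1 - b) + b * \<alpha>"
  define e where "e = b * \<alpha>"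
  define g where "g = b * \<beta>"
  define L where "L = (\<lambda>m k y. pmf (Rn b W m) (k, y))"
  have RR: "R = Rn b W n" unfolding R_def M_def W_def Fm_def using R_eq[OF assms(5,9)] .
  have FE1: "Fm -` S1 = E1" and FE2: "Fm -` S2 = E2"
    by (auto simp: Fm_def S1_def S2_def E1_def E2_def)
  have P1: "measure R S1 = measure M E1" and P2: "measure R S2 = measure M E2"
    by (simp_all add: R_def FE1 FE2)
  have P1pos: "measure R S1 > 0" using assms(11) by (simp add: P1 M_def E1_def)
  have P2pos: "measure R S2 > 0" using assms(12) by (simp add: P2 M_def E2_def)
  have L0: "L 0 k y = (if k = 0 \<and> y = 0 then 1 else 0)" for k y
    by (simp add: L_def Rn_def K_def pmf_return bind_return_pmf)
  have LS: "L (Suc m) k y = c * L m k y + e * L m (k - 2) y + g * L m (k - 1) (y - 1) + g * L m (k - 1) (y + 1)" for m k y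
    unfolding L_def W_def pmf_Rn_Suc[OF assms(3,4,6,7,8)] c_def e_def g_def by (simp add: algebra_simps)
  have key: "L n (int n + int x) y * c ^ x = L n (int n - int x) y * e ^ x" for y
    using sym_gen[of L c e g n "int n + int x" y, OF L0 LS] by simp
  have pmfR: "pmf R (k, y) = L n k y" for k y by (simp add: RR L_def)
  have zero1: "measure R S1 = 0" if "\<And>y. L n (int n + int x) y = 0"
    using that by (subst measure_pmf_zero_iff) (auto simp: S1_def set_pmf_iff pmfR)
  have zero2: "measure R S2 = 0" if "\<And>y. L n (int n - int x) y = 0"
    using that by (subst measure_pmf_zero_iff) (auto simp: S2_def set_pmf_iff pmfR)
  have cnz: "c \<noteq> 0" and enz: "e \<noteq> 0"
  proof -
    have ce_nn: "0 \<le> e" "0 \<le> c" using assms(3,4,6) by (simp_all add: c_def e_def)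
    show "c \<noteq> 0"
    proof
      assume c0: "c = 0"
      show False
      proof (cases "e = 0")
        case True
        have LS0: "L (Suc m) k y = 0 * L m k y + 0 * L m (k - 2) y + g * L m (k - 1) (y - 1) + g * L m (k - 1) (y + 1)" for m k y
          using LS[of m k y] c0 True by simp
        have "L n (int n + int x) y = 0" for y
          using deg_gen[of L g n "int n + int x" y, OF L0 LS0] False by auto
        then show False using zero1 P1pos by simp
      next
        case False
        have "L n (int n - int x) y = 0" for y using key[of y] c0 False \<open>x \<noteq> 0\<close> by (simp add: power_0_left)
        then show False using zero2 P2pos by simp
      qed
    qed
    show "e \<noteq> 0"
    proof
      assume e0: "e = 0"
      have "L n (int n + int x) y = 0" for y using key[of y] e0 \<open>c \<noteq> 0\<close> \<open>x \<noteq> 0\<close> by (simp add: power_0_left)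
      then show False using zero1 P1pos by simp
    qed
  qed
  define sh where "sh = (\<lambda>r::int\<times>int. (2 * int x + fst r, 0 + snd r))"
  have ne1: "set_pmf R \<inter> S1 \<noteq> {}" using P1pos nonempty_of_prob by blast
  have ne2: "set_pmf R \<inter> S2 \<noteq> {}" using P2pos nonempty_of_prob by blast
  have condeq: "cond_pmf R S1 = map_pmf sh (cond_pmf R S2)"
  proof (rule pmf_prop_eq[where \<kappa> = "(e / c) ^ x * measure R S2 / measure R S1"])
    fix z :: "int \<times> int"
    obtain k y where z: "z = (k, y)" by (cases z)
    have "pmf (map_pmf sh (cond_pmf R S2)) z = pmf (cond_pmf R S2) (k - 2 * int x, y)"
      unfolding sh_def z pmf_shift by simp
    also have "\<dots> = (if k = int n + int x then L n (int n - int x) y / measure R S2 else 0)"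
      unfolding pmf_cond[OF ne2] by (auto simp: S2_def pmfR)
    finally have r: "pmf (map_pmf sh (cond_pmf R S2)) z = (if k = int n + int x then L n (int n - int x) y / measure R S2 else 0)" .
    have l: "pmf (cond_pmf R S1) z = (if k = int n + int x then L n (int n + int x) y / measure R S1 else 0)"
      unfolding pmf_cond[OF ne1] z by (auto simp: S1_def pmfR)
    have k2: "L n (int n + int x) y = (e / c) ^ x * L n (int n - int x) y"
      using key[of y] cnz by (simp add: power_divide field_simps)
    show "pmf (cond_pmf R S1) z = (e / c) ^ x * measure R S2 / measure R S1 * pmf (map_pmf sh (cond_pmf R S2)) z"
      unfolding l r k2 using arith_aux[of "measure R S2" "(e / c) ^ x" "L n (int n - int x) y" "measure R S1"] P2pos
      by simp
  qed
  have neM1: "set_pmf M \<inter> Fm -` S1 \<noteq> {}" using ne1 by (auto simp: R_def)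
  have neM2: "set_pmf M \<inter> Fm -` S2 \<noteq> {}" using ne2 by (auto simp: R_def)
  have m1: "map_pmf SY (cond_pmf M E1) = map_pmf snd (cond_pmf R S1)"
    unfolding R_def cond_map_pmf[OF neM1] FE1 map_pmf_comp by (simp add: Fm_def)
  have m2: "map_pmf SY (cond_pmf M E2) = map_pmf snd (cond_pmf R S2)"
    unfolding R_def cond_map_pmf[OF neM2] FE2 map_pmf_comp by (simp add: Fm_def)
  have shs: "(\<lambda>r. snd (sh r)) = snd" by (simp add: sh_def fun_eq_iff)
  have m12: "map_pmf snd (cond_pmf R S1) = map_pmf snd (cond_pmf R S2)"
    by (simp only: condeq map_pmf_comp shs)
  have "cond_var M E1 (\<lambda>\<omega>. real_of_int (SY \<omega>)) = cond_var M E2 (\<lambda>\<omega>. real_of_int (SY \<omega>))"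
  proof -
    have v1: "cond_var M E1 (\<lambda>\<omega>. real_of_int (SY \<omega>)) = measure_pmf.variance (map_pmf SY (cond_pmf M E1)) real_of_int"
      unfolding cond_var_def by (rule var_map)
    have v2: "cond_var M E2 (\<lambda>\<omega>. real_of_int (SY \<omega>)) = measure_pmf.variance (map_pmf SY (cond_pmf M E2)) real_of_int"
      unfolding cond_var_def by (rule var_map)
    show ?thesis by (simp only: v1 v2 m1 m2 m12)
  qed
  then show ?thesis unfolding M_def E1_def E2_def .
qed

end
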